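(* Let $(V,\varphi,\xi,\eta,g)$, $\mathcal{F}$, $W_2$, $q_1,q_2$ be as in the context, and let $F\in W_2$ with associated operator $\mathcal{A}_\xi$. Then: (i) $F=q_1F$ if and only if $\mathcal{A}_\xi\circ\varphi=\varphi\circ\mathcal{A}_\xi$; (ii) $F=q_1F$ if and only if $F(X,Y,Z)=-F(\varphi X,\varphi Y,Z)-F(\varphi X,Y,\varphi Z)$ for all $X,Y,Z\in V$; (iii) $F=q_2F$ if and only if $\mathcal{A}_\xi\circ\varphi=-\varphi\circ\mathcal{A}_\xi$; (iv) $F=q_2F$ if and only if $F(X,Y,Z)=F(\varphi X,\varphi Y,Z)+F(\varphi X,Y,\varphi Z)$ for all $X,Y,Z\in V$.
   Context: Let $V$ be a real vector space of dimension $2n+1$ with an endomorphism $\varphi$, a vector $\xi$ and a linear form $\eta$ such that $\varphi\xi=0$, $\eta\circ\varphi=0$, $\eta(\xi)=1$, $\varphi^2=\mathrm{id}-\eta\otimes\xi$, and such that $\varphi$ restricted to $\mathbb{D}=\ker\eta$ has eigenvalues $\pm1$ with eigenspaces of equal dimension $n$. Let $g$ be a nondegenerate symmetric bilinear form on $V$ with $g(\varphi X,\varphi Y)=-g(X,Y)+\eta(X)\eta(Y)$; then $\eta(X)=g(X,\xi)$. Write $hX=X-\eta(X)\xi$. Fix a basis $\{e_1,\dots,e_{2n}\}$ of $\mathbb{D}$ and write $Y=Y^ie_i+\eta(Y)\xi$. Let $\mathcal{F}$ be the vector space of all $(0,3)$-tensors of the form $F(X,Y,Z)=Y^ig(\mathcal{A}_{e_i}X,Z)+\eta(Y)g(\mathcal{A}_\xi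 X,\varphi Z)$, where $\mathcal{A}_{e_i}:V\to V$ and $\mathcal{A}_\xi:V\to\mathbb{D}$ are linear maps satisfying for all $X$, $i,j$: $g(\mathcal{A}_{e_i}X,e_j)=-g(\mathcal{A}_{e_j}X,e_i)$; $\mathcal{A}_{\varphi e_i}X=-\varphi(\mathcal{A}_{e_i}X)-g(\mathcal{A}_\xi X,e_i)\xi$ (index extended linearly); $\eta(\mathcal{A}_{e_i}X)=-g(\mathcal{A}_\xi X,\varphi e_i)$; $\eta(\mathcal{A}_\xi X)=0$. These operators are determined by $F$ (e.g. $\mathcal{A}_\xi X\in\mathbb{D}$ is characterized by $g(\mathcal{A}_\xi X,\varphi Z)=F(X,\xi,Z)$ for all $Z$); $\mathcal{A}_\xi$ is called the operator associated with $F$. Let $p_2(F)(X,Y,Z)=-\eta(Y)F(hX,hZ,\xi)+\eta(Z)F(hX,hY,\xi)$ and $W_2=\{F\in\mathcal{F}:F=p_2F\}$; every $F\in W_2$ has the form $F(X,Y,Z)=-\eta(Y)g(\varphi(\mathcal{A}_\xi X),Z)+\eta(Z)g(\varphi(\mathcal{A}_\xi X),Y)$ with $\mathcal{A}_\xi\xi=0$. For $F\in W_2$ with associated operator $A=\mathcal{A}_\xi$, define $q_1(F)(X,Y,Z)=-\tfrac12\eta(Y)\{g(\varphi(AX),Z)+g(A(\varphi X),Z)\}+\tfrac12\eta(Z)\{g(\varphi(AX),Y)+g(A(\varphi X),Y)\}$, $q_2(F)(X,Y,Z)=-\tfrac12\eta(Y)\{g(\varphi(AX),Z)-g(A(\varphi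 X),Z)\}+\tfrac12\eta(Z)\{g(\varphi(AX),Y)-g(A(\varphi X),Y)\}$. *)

theory Defs
  imports "HOL-Analysis.Analysis"
begin

definition hproj :: "('v::real_vector \<Rightarrow> real) \<Rightarrow> 'v \<Rightarrow> 'v \<Rightarrow> 'v" where
  "hproj \<eta> \<xi> X = X - \<eta> X *\<^sub>R \<xi>"

definition para_structure ::
  "('v::euclidean_space \<Rightarrow> 'v) \<Rightarrow> 'v \<Rightarrow> ('v \<Rightarrow> real) \<Rightarrow> ('v \<Rightarrow> 'v \<Rightarrow> real) \<Rightarrow> nat \<Rightarrow> bool" where
  "para_structure \<phi> \<xi> \<eta> g n \<longleftrightarrow>
     DIM('v) = 2 * n + 1 \<and>
     linear \<phi> \<and> linear \<eta> \<and>
     \<phi> \<xi> = 0 \<and> (\<forall>X. \<eta> (\<phi> X) = 0) \<and> \<eta> \<xi> = 1 \<and>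
     (\<forall>X. \<phi> (\<phi> X) = X - \<eta> X *\<^sub>R \<xi>) \<and>
     dim {X. \<eta> X = 0 \<and> \<phi> X = X} = n \<and>
     dim {X. \<eta> X = 0 \<and> \<phi> X = - X} = n \<and>
     bilinear g \<and> (\<forall>X Y. g X Y = g Y X) \<and>
     (\<forall>X. (\<forall>Y. g X Y = 0) \<longrightarrow> X = 0) \<and>
     (\<forall>X Y. g (\<phi> X) (\<phi> Y) = - g X Y + \<eta> X * \<eta> Y)"

text \<open>The space F. The family of operators A_{e_i} is encoded as a bilinear map
  B with B U X = A_U X for U in D (A_U = U^i A_{e_i}, index extended linearly).\<close>
definition in_F ::
  "('v::euclidean_space \<Rightarrow> 'v) \<Rightarrow> 'v \<Rightarrow> ('v \<Rightarrow> real) \<Rightarrow> ('v \<Rightarrow> 'v \<Rightarrow> real)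
   \<Rightarrow> ('v \<Rightarrow> 'v \<Rightarrow> 'v \<Rightarrow> real) \<Rightarrow> bool" where
  "in_F \<phi> \<xi> \<eta> g F \<longleftrightarrow>
     (\<exists>B A. bilinear B \<and> linear A \<and>
        (\<forall>X. \<eta> (A X) = 0) \<and>
        (\<forall>U W X. \<eta> U = 0 \<longrightarrow> \<eta> W = 0 \<longrightarrow> g (B U X) W = - g (B W X) U) \<and>
        (\<forall>U X. \<eta> U = 0 \<longrightarrow> B (\<phi> U) X = - \<phi> (B U X) - g (A X) U *\<^sub>R \<xi>) \<and>
        (\<forall>U X. \<eta> U = 0 \<longrightarrow> \<eta> (B U X) = - g (A X) (\<phi> U)) \<and>
        (\<forall>X Y Z. F X Y Z = g (B (hproj \<eta> \<xi> Y) X) Z + \<eta> Y * g (A X) (\<phi> Z)))"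

definition p2 ::
  "'v::real_vector \<Rightarrow> ('v \<Rightarrow> real) \<Rightarrow> ('v \<Rightarrow> 'v \<Rightarrow> 'v \<Rightarrow> real) \<Rightarrow> ('v \<Rightarrow> 'v \<Rightarrow> 'v \<Rightarrow> real)" where
  "p2 \<xi> \<eta> F = (\<lambda>X Y Z. - \<eta> Y * F (hproj \<eta> \<xi> X) (hproj \<eta> \<xi> Z) \<xi>
                         + \<eta> Z * F (hproj \<eta> \<xi> X) (hproj \<eta> \<xi> Y) \<xi>)"

definition in_W2 ::
  "('v::euclidean_space \<Rightarrow> 'v) \<Rightarrow> 'v \<Rightarrow> ('v \<Rightarrow> real) \<Rightarrow> ('v \<Rightarrow> 'v \<Rightarrow> real)
   \<Rightarrow> ('v \<Rightarrow> 'v \<Rightarrow> 'v \<Rightarrow> real) \<Rightarrow> bool" where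
  "in_W2 \<phi> \<xi> \<eta> g F \<longleftrightarrow> in_F \<phi> \<xi> \<eta> g F \<and> F = p2 \<xi> \<eta> F"

definition q1 ::
  "('v \<Rightarrow> 'v) \<Rightarrow> ('v \<Rightarrow> real) \<Rightarrow> ('v \<Rightarrow> 'v \<Rightarrow> real) \<Rightarrow> ('v \<Rightarrow> 'v)
   \<Rightarrow> ('v \<Rightarrow> 'v \<Rightarrow> 'v \<Rightarrow> real)" where
  "q1 \<phi> \<eta> g A = (\<lambda>X Y Z.
      - (1/2) * \<eta> Y * (g (\<phi> (A X)) Z + g (A (\<phi> X)) Z)
      + (1/2) * \<eta> Z * (g (\<phi> (A X)) Y + g (A (\<phi> X)) Y))"

definition q2 ::
  "('v \<Rightarrow> 'v) \<Rightarrow> ('v \<Rightarrow> real) \<Rightarrow> ('v \<Rightarrow> 'v \<Rightarrow> real) \<Rightarrow> ('v \<Rightarrow> 'v)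
   \<Rightarrow> ('v \<Rightarrow> 'v \<Rightarrow> 'v \<Rightarrow> real)" where
  "q2 \<phi> \<eta> g A = (\<lambda>X Y Z.
      - (1/2) * \<eta> Y * (g (\<phi> (A X)) Z - g (A (\<phi> X)) Z)
      + (1/2) * \<eta> Z * (g (\<phi> (A X)) Y - g (A (\<phi> X)) Y))"

end

theory Submission
  imports Defs
begin

theorem proposition4p2:
  fixes \<phi> :: "'v::euclidean_space \<Rightarrow> 'v" and \<xi> :: 'v and \<eta> :: "'v \<Rightarrow> real"
    and g :: "'v \<Rightarrow> 'v \<Rightarrow> real" and n :: nat
    and F :: "'v \<Rightarrow> 'v \<Rightarrow> 'v \<Rightarrow> real" and A :: "'v \<Rightarrow> 'v"
  assumes str: "para_structure \<phi> \<xi> \<eta> g n"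
    and W2: "in_W2 \<phi> \<xi> \<eta> g F"
    and A_lin: "linear A"
    and A_D: "\<forall>X. \<eta> (A X) = 0"
    and A_F: "\<forall>X Z. g (A X) (\<phi> Z) = F X \<xi> Z"
  shows "(F = q1 \<phi> \<eta> g A \<longleftrightarrow> (\<forall>X. A (\<phi> X) = \<phi> (A X)))
       \<and> (F = q1 \<phi> \<eta> g A \<longleftrightarrow>
            (\<forall>X Y Z. F X Y Z = - F (\<phi> X) (\<phi> Y) Z - F (\<phi> X) Y (\<phi> Z)))
       \<and> (F = q2 \<phi> \<eta> g A \<longleftrightarrow> (\<forall>X. A (\<phi> X) = - \<phi> (A X)))
       \<and> (F = q2 \<phi> \<eta> g A \<longleftrightarrow>
            (\<forall>X Y Z. F X Y Z = F (\<phi> X) (\<phi> Y) Z + F (\<phi> X) Y (\<phi> Z)))"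
proof -
  from str have phil: "linear \<phi>" and etal: "linear \<eta>" and phixi: "\<phi> \<xi> = 0"
    and etaphi: "\<And>X. \<eta> (\<phi> X) = 0" and etaxi: "\<eta> \<xi> = 1"
    and phi2: "\<And>X. \<phi> (\<phi> X) = X - \<eta> X *\<^sub>R \<xi>"
    and gbil: "bilinear g" and gsym: "\<And>X Y. g X Y = g Y X"
    and nd: "\<And>X. (\<forall>Y. g X Y = 0) \<Longrightarrow> X = 0"
    and comp: "\<And>X Y. g (\<phi> X) (\<phi> Y) = - g X Y + \<eta> X * \<eta> Y"
    unfolding para_structure_def by auto
  have gl: "linear (\<lambda>x. g x y)" for y using gbil unfolding bilinear_def by auto
  have gr: "linear (\<lambda>y. g x y)" for x using gbil unfolding bilinear_def by auto
  have g0r: "g x 0 = 0" for x using linear_0[OF gr] by simp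
  have g0l: "g 0 x = 0" for x using linear_0[OF gl] by simp
  have grdiff: "g x (a - b) = g x a - g x b" for x a b using linear_diff[OF gr] by simp
  have gldiff: "g (a - b) x = g a x - g b x" for x a b using linear_diff[OF gl] by simp
  have gladd: "g (a + b) x = g a x + g b x" for x a b using linear_add[OF gl] by simp
  have grscale: "g x (c *\<^sub>R a) = c * g x a" for x a c using linear_scale[OF gr] by simp
  have etadiff: "\<eta> (a - b) = \<eta> a - \<eta> b" for a b using linear_diff[OF etal] by simp
  have etaadd: "\<eta> (a + b) = \<eta> a + \<eta> b" for a b using linear_add[OF etal] by simp
  have eta0: "\<eta> 0 = 0" using linear_0[OF etal] .
  have phidiff: "\<phi> (a - b) = \<phi> a - \<phi> b" for a b using linear_diff[OF phil] by simp
  have phiscale: "\<phi> (c *\<^sub>R a) = c *\<^sub>R \<phi> a" for a c using linear_scale[OF phil] by simp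
  have A0: "A 0 = 0" using linear_0[OF A_lin] .
  have Adiff: "A (a - b) = A a - A b" for a b using linear_diff[OF A_lin] by simp
  have Ascale: "A (c *\<^sub>R a) = c *\<^sub>R A a" for a c using linear_scale[OF A_lin] by simp
  have gxi: "g X \<xi> = \<eta> X" for X using comp[of X \<xi>] phixi g0r etaxi by simp
  have phih: "\<phi> (hproj \<eta> \<xi> Y) = \<phi> Y" for Y
    unfolding hproj_def phidiff phiscale phixi by simp
  have etah: "\<eta> (hproj \<eta> \<xi> Y) = 0" for Y
    unfolding hproj_def etadiff using linear_scale[OF etal] etaxi by simp
  have hxi: "hproj \<eta> \<xi> \<xi> = 0" unfolding hproj_def etaxi by simp
  have ndD: "U = 0" if "\<eta> U = 0" "\<forall>Z. g U (\<phi> Z) = 0" for U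
  proof (rule nd, intro allI)
    fix Y
    have "Y = \<phi> (\<phi> Y) + \<eta> Y *\<^sub>R \<xi>" using phi2 by simp
    then have "g U Y = g U (\<phi> (\<phi> Y)) + \<eta> Y * g U \<xi>"
      by (metis gsym gladd grscale)
    then show "g U Y = 0" using that gsym gxi by simp
  qed
  have adj: "g U (\<phi> Z) = - g (\<phi> U) Z" for U Z
  proof -
    have "g (\<phi> U) (\<phi> (\<phi> Z)) = - g U (\<phi> Z)" using comp etaphi by simp
    moreover have "g (\<phi> U) (\<phi> (\<phi> Z)) = g (\<phi> U) Z"
      using phi2 grdiff grscale gxi etaphi by simp
    ultimately show ?thesis by simp
  qed
  from W2 have Fp2: "F = p2 \<xi> \<eta> F" and inF: "in_F \<phi> \<xi> \<eta> g F"
    unfolding in_W2_def by auto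
  from inF obtain B A' where Bb: "bilinear B" and A'l: "linear A'"
    and Bskew: "\<forall>U X. \<eta> U = 0 \<longrightarrow> \<eta> (B U X) = - g (A' X) (\<phi> U)"
    and Fdef: "\<forall>X Y Z. F X Y Z = g (B (hproj \<eta> \<xi> Y) X) Z + \<eta> Y * g (A' X) (\<phi> Z)"
    unfolding in_F_def by blast
  have B0: "B 0 X = 0" for X using Bb unfolding bilinear_def using linear_0 by blast
  have FxiZ: "F X \<xi> Z = g (A' X) (\<phi> Z)" for X Z
    using Fdef hxi B0 g0l etaxi by simp
  have AA': "g (A X) (\<phi> Z) = g (A' X) (\<phi> Z)" for X Z using A_F FxiZ by simp
  have FYxi: "F X Y \<xi> = - g (A X) (\<phi> Y)" for X Y
    using Fdef gxi Bskew etah phih AA' phixi g0r by simp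
  have Axi: "A \<xi> = 0"
  proof (rule ndD)
    show "\<eta> (A \<xi>) = 0" using A_D by simp
    show "\<forall>Z. g (A \<xi>) (\<phi> Z) = 0"
    proof
      fix Z
      have "F \<xi> \<xi> Z = p2 \<xi> \<eta> F \<xi> \<xi> Z" using Fp2 by simp
      also have "\<dots> = 0" unfolding p2_def hxi FYxi A0 g0l by simp
      finally show "g (A \<xi>) (\<phi> Z) = 0" using A_F by simp
    qed
  qed
  have Ah: "A (hproj \<eta> \<xi> X) = A X" for X
    unfolding hproj_def Adiff Ascale Axi by simp
  have Fform: "F X Y Z = - \<eta> Y * g (\<phi> (A X)) Z + \<eta> Z * g (\<phi> (A X)) Y" for X Y Z
  proof -
    have "F X Y Z = p2 \<xi> \<eta> F X Y Z" using Fp2 by simp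
    also have "\<dots> = \<eta> Y * g (A X) (\<phi> Z) - \<eta> Z * g (A X) (\<phi> Y)"
      unfolding p2_def FYxi Ah phih by simp
    finally show ?thesis using adj by simp
  qed
  have key: "(\<forall>X Y Z. \<eta> Y * g (C X) Z = \<eta> Z * g (C X) Y) \<longleftrightarrow> (\<forall>X. C X = 0)"
    if etaC: "\<And>X. \<eta> (C X) = 0" for C
  proof
    assume h: "\<forall>X Y Z. \<eta> Y * g (C X) Z = \<eta> Z * g (C X) Y"
    show "\<forall>X. C X = 0"
    proof
      fix X
      show "C X = 0"
      proof (rule nd, intro allI)
        fix Z
        have "\<eta> \<xi> * g (C X) Z = \<eta> Z * g (C X) \<xi>" using h by blast
        then show "g (C X) Z = 0" using etaxi gxi etaC by simp
      qed
    qed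
  qed (simp add: g0l)
  have gphiphi: "g (\<phi> (A (\<phi> X))) (\<phi> Y) = - g (A (\<phi> X)) Y" for X Y
    using comp A_D by simp
  have q1eq: "F = q1 \<phi> \<eta> g A \<longleftrightarrow>
     (\<forall>X Y Z. \<eta> Y * g (\<phi> (A X) - A (\<phi> X)) Z = \<eta> Z * g (\<phi> (A X) - A (\<phi> X)) Y)"
  proof -
    have pt: "F X Y Z = q1 \<phi> \<eta> g A X Y Z \<longleftrightarrow>
       \<eta> Y * g (\<phi> (A X) - A (\<phi> X)) Z = \<eta> Z * g (\<phi> (A X) - A (\<phi> X)) Y" for X Y Z
    proof -
      define a where "a = g (\<phi> (A X)) Z"
      define b where "b = g (A (\<phi> X)) Z"
      define c where "c = g (\<phi> (A X)) Y"
      define d where "d = g (A (\<phi> X)) Y"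
      show ?thesis unfolding q1_def Fform gldiff a_def[symmetric] b_def[symmetric]
        c_def[symmetric] d_def[symmetric] by argo
    qed
    show ?thesis unfolding fun_eq_iff pt by blast
  qed
  have q2eq: "F = q2 \<phi> \<eta> g A \<longleftrightarrow>
     (\<forall>X Y Z. \<eta> Y * g (\<phi> (A X) + A (\<phi> X)) Z = \<eta> Z * g (\<phi> (A X) + A (\<phi> X)) Y)"
  proof -
    have pt: "F X Y Z = q2 \<phi> \<eta> g A X Y Z \<longleftrightarrow>
       \<eta> Y * g (\<phi> (A X) + A (\<phi> X)) Z = \<eta> Z * g (\<phi> (A X) + A (\<phi> X)) Y" for X Y Z
    proof -
      define a where "a = g (\<phi> (A X)) Z"
      define b where "b = g (A (\<phi> X)) Z"
      define c where "c = g (\<phi> (A X)) Y"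
      define d where "d = g (A (\<phi> X)) Y"
      show ?thesis unfolding q2_def Fform gladd a_def[symmetric] b_def[symmetric]
        c_def[symmetric] d_def[symmetric] by argo
    qed
    show ?thesis unfolding fun_eq_iff pt by blast
  qed
  have Fpp: "F (\<phi> X) (\<phi> Y) Z = - \<eta> Z * g (A (\<phi> X)) Y" for X Y Z
    using Fform[of "\<phi> X" "\<phi> Y" Z] etaphi gphiphi by simp
  have Fpq: "F (\<phi> X) Y (\<phi> Z) = \<eta> Y * g (A (\<phi> X)) Z" for X Y Z
    using Fform[of "\<phi> X" Y "\<phi> Z"] etaphi gphiphi by simp
  have c1: "(\<forall>X Y Z. F X Y Z = - F (\<phi> X) (\<phi> Y) Z - F (\<phi> X) Y (\<phi> Z)) \<longleftrightarrow>
     (\<forall>X Y Z. \<eta> Y * g (\<phi> (A X) - A (\<phi> X)) Z = \<eta> Z * g (\<phi> (A X) - A (\<phi> X)) Y)"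
  proof -
    have pt: "F X Y Z = - F (\<phi> X) (\<phi> Y) Z - F (\<phi> X) Y (\<phi> Z) \<longleftrightarrow>
       \<eta> Y * g (\<phi> (A X) - A (\<phi> X)) Z = \<eta> Z * g (\<phi> (A X) - A (\<phi> X)) Y" for X Y Z
    proof -
      define a where "a = g (\<phi> (A X)) Z"
      define b where "b = g (A (\<phi> X)) Z"
      define c where "c = g (\<phi> (A X)) Y"
      define d where "d = g (A (\<phi> X)) Y"
      show ?thesis unfolding Fpp Fpq unfolding Fform gldiff a_def[symmetric] b_def[symmetric]
        c_def[symmetric] d_def[symmetric] by argo
    qed
    show ?thesis unfolding pt by blast
  qed
  have c2: "(\<forall>X Y Z. F X Y Z = F (\<phi> X) (\<phi> Y) Z + F (\<phi> X) Y (\<phi> Z)) \<longleftrightarrow>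
     (\<forall>X Y Z. \<eta> Y * g (\<phi> (A X) + A (\<phi> X)) Z = \<eta> Z * g (\<phi> (A X) + A (\<phi> X)) Y)"
  proof -
    have pt: "F X Y Z = F (\<phi> X) (\<phi> Y) Z + F (\<phi> X) Y (\<phi> Z) \<longleftrightarrow>
       \<eta> Y * g (\<phi> (A X) + A (\<phi> X)) Z = \<eta> Z * g (\<phi> (A X) + A (\<phi> X)) Y" for X Y Z
    proof -
      define a where "a = g (\<phi> (A X)) Z"
      define b where "b = g (A (\<phi> X)) Z"
      define c where "c = g (\<phi> (A X)) Y"
      define d where "d = g (A (\<phi> X)) Y"
      show ?thesis unfolding Fpp Fpq unfolding Fform gladd a_def[symmetric] b_def[symmetric]
        c_def[symmetric] d_def[symmetric] by argo
    qed
    show ?thesis unfolding pt by blast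
  qed
  have e1: "\<And>X. \<eta> (\<phi> (A X) - A (\<phi> X)) = 0" by (simp add: etadiff etaphi A_D)
  have e2: "\<And>X. \<eta> (\<phi> (A X) + A (\<phi> X)) = 0" by (simp add: etaadd etaphi A_D)
  have k1: "(\<forall>X Y Z. \<eta> Y * g (\<phi> (A X) - A (\<phi> X)) Z = \<eta> Z * g (\<phi> (A X) - A (\<phi> X)) Y)
      \<longleftrightarrow> (\<forall>X. A (\<phi> X) = \<phi> (A X))"
    unfolding key[of "\<lambda>X. \<phi> (A X) - A (\<phi> X)", OF e1] right_minus_eq by metis
  have k2: "(\<forall>X Y Z. \<eta> Y * g (\<phi> (A X) + A (\<phi> X)) Z = \<eta> Z * g (\<phi> (A X) + A (\<phi> X)) Y)
      \<longleftrightarrow> (\<forall>X. A (\<phi> X) = - \<phi> (A X))"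
    unfolding key[of "\<lambda>X. \<phi> (A X) + A (\<phi> X)", OF e2] add_eq_0_iff by (rule refl)
  show ?thesis unfolding q1eq q2eq c1 c2 k1 k2 by (rule conjI refl)+
qed

end
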